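(* Let $s>0$, $Y>0$ and $\tau\geq 0$, and consider the delay differential system \[ \dot x(t)=x(t)(1-x(t))-y(t)x(t),\qquad \dot y(t)=-sy(t)+Ye^{-s\tau}y(t-\tau)x(t-\tau), \] with initial data $(x(t),y(t))=(\phi(t),\psi(t))$ for $t\in[-\tau,0]$, where $(\phi,\psi)\in X:=C([-\tau,0],\mathbb{R}_+)\times C([-\tau,0],\mathbb{R}_+)$. \begin{enumerate} \item The solutions exist, are unique, and remain nonnegative for all $t\geq 0$. \item $\limsup_{t\to\infty}x(t)\leq 1$ and $\limsup_{t\to\infty}y(t)\leq \frac{1}{4s}Ye^{-s\tau}(s+1)^2$. \item If the initial data lie in \[ X^0=\{(\phi,\psi)\in X:\ \phi(0)>0 \text{ and there exists } \theta\in[-\tau,0] \text{ with } \phi(\theta)\psi(\theta)>0\}, \] then $x(t)>0$ for all $t>0$ and there exists $T\geq 0$ such that $y(t)>0$ for all $t>T$. \end{enumerate}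
   Context: $\mathbb{R}_+=\{x\in\mathbb{R}: x\geq 0\}$. $C([-\tau,0],\mathbb{R}_+)$ is the Banach space of continuous functions $[-\tau,0]\to\mathbb{R}_+$ with the uniform norm. *)

theory Defs
  imports "HOL-Analysis.Analysis"
begin

text \<open>An element of C([-tau,0], R_+): a function continuous on [-tau,0] with
  nonnegative values there (values outside [-tau,0] are irrelevant).\<close>
definition init_datum :: "real \<Rightarrow> (real \<Rightarrow> real) \<Rightarrow> bool" where
  "init_datum tau \<phi> \<longleftrightarrow> continuous_on {-tau..0} \<phi> \<and> (\<forall>\<theta>\<in>{-tau..0}. \<phi> \<theta> \<ge> 0)"

definition dde_solution ::
  "real \<Rightarrow> real \<Rightarrow> real \<Rightarrow> (real \<Rightarrow> real) \<Rightarrow> (real \<Rightarrow> real)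
     \<Rightarrow> (real \<Rightarrow> real) \<Rightarrow> (real \<Rightarrow> real) \<Rightarrow> bool" where
  "dde_solution s Y tau \<phi> \<psi> x y \<longleftrightarrow>
     continuous_on {-tau..} x \<and> continuous_on {-tau..} y \<and>
     (\<forall>t\<in>{-tau..0}. x t = \<phi> t \<and> y t = \<psi> t) \<and>
     (\<forall>t\<ge>0. (x has_real_derivative (x t * (1 - x t) - y t * x t)) (at t within {0..}) \<and>
             (y has_real_derivative (- s * y t + Y * exp (- s * tau) * y (t - tau) * x (t - tau)))
                (at t within {0..}))"

end

theory Submission
  imports Defs
begin

lemma cont_from_deriv:
  fixes f f' :: "real \<Rightarrow> real"
  assumes der: "\<And>t. t \<ge> a \<Longrightarrow> (f has_real_derivative f' t) (at t within {a..})"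
  shows "continuous_on {a..} f"
  unfolding continuous_on_eq_continuous_within
proof
  fix x assume "x \<in> {a..}"
  thus "continuous (at x within {a..}) f" using der[of x] by (auto dest: DERIV_continuous)
qed

lemma barrier:
  fixes f f' :: "real \<Rightarrow> real"
  assumes der: "\<And>t. t \<ge> a \<Longrightarrow> (f has_real_derivative f' t) (at t within {a..})"
    and init: "f a \<le> M" and neg: "\<And>t. t \<ge> a \<Longrightarrow> f t > M \<Longrightarrow> f' t \<le> 0"
    and tge: "t \<ge> a"
  shows "f t \<le> M"
proof (rule ccontr)
  assume "\<not> f t \<le> M" hence ft: "f t > M" by simp
  have cont: "continuous_on {a..t} f"
    using cont_from_deriv[OF der] by (rule continuous_on_subset) auto
  define S where "S = {a..t} \<inter> f -` {..M}"
  have clS: "closed S" unfolding S_def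
    by (rule continuous_closed_preimage[OF cont]) auto
  have aS: "a \<in> S" using init tge by (auto simp: S_def)
  have bdd: "bdd_above S" unfolding S_def by (auto intro: bdd_aboveI[where M=t])
  define t0 where "t0 = Sup S"
  have t0S: "t0 \<in> S" unfolding t0_def using closed_contains_Sup[OF _ bdd clS] aS by blast
  hence t0: "a \<le> t0" "t0 \<le> t" "f t0 \<le> M" by (auto simp: S_def)
  have lt: "t0 < t" using t0 ft by (cases "t0 = t") auto
  have gt: "f x > M" if "t0 < x" "x \<le> t" for x
  proof (rule ccontr)
    assume "\<not> f x > M"
    hence "x \<in> S" using that t0 by (auto simp: S_def)
    hence "x \<le> t0" unfolding t0_def using bdd by (rule cSup_upper)
    thus False using that by simp
  qed
  have "\<exists>x\<in>{t0<..<t}. f t - f t0 = (\<lambda>h. f' x * h) (t - t0)"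
  proof (rule mvt_simple[OF lt])
    fix x assume "t0 \<le> x" "x \<le> t"
    hence "(f has_real_derivative f' x) (at x within {t0..t})"
      using der[of x] t0 by (auto intro: DERIV_subset)
    thus "(f has_derivative (\<lambda>h. f' x * h)) (at x within {t0..t})"
      by (simp add: has_field_derivative_def)
  qed
  then obtain x where x: "t0 < x" "x < t" "f t - f t0 = (t - t0) * f' x" by (auto simp: mult.commute)
  have "f' x \<le> 0" using neg[of x] gt[of x] x t0 by auto
  hence "(t - t0) * f' x \<le> 0" using lt by (simp add: mult_nonneg_nonpos)
  thus False using x t0 ft by simp
qed

lemma mono_deriv:
  fixes f f' :: "real \<Rightarrow> real"
  assumes der: "\<And>t. t \<ge> a \<Longrightarrow> (f has_real_derivative f' t) (at t within {a..})"
    and pos: "\<And>t. t \<ge> a \<Longrightarrow> f' t \<ge> 0" and "t \<ge> a"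
  shows "f a \<le> f t"
proof -
  have "- f t \<le> - f a"
    by (rule barrier[where f="\<lambda>t. - f t" and f'="\<lambda>t. - f' t"])
       (use der pos assms(3) in \<open>auto intro: derivative_intros\<close>)
  thus ?thesis by simp
qed

lemma decay:
  fixes f f' :: "real \<Rightarrow> real"
  assumes der: "\<And>t. t \<ge> a \<Longrightarrow> (f has_real_derivative f' t) (at t within {a..})"
    and neg: "\<And>t. t \<ge> a \<Longrightarrow> f t > M \<Longrightarrow> f' t \<le> - d" and d: "d > 0"
  shows "\<exists>T\<ge>a. \<forall>t\<ge>T. f t \<le> M"
proof (cases "\<exists>t1\<ge>a. f t1 \<le> M")
  case True
  then obtain t1 where t1: "t1 \<ge> a" "f t1 \<le> M" by auto
  have "f t \<le> M" if "t \<ge> t1" for t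
  proof (rule barrier[where a=t1 and f=f and f'=f'])
    fix u assume "u \<ge> t1"
    thus "(f has_real_derivative f' u) (at u within {t1..})"
      using der[of u] t1 by (auto intro: DERIV_subset)
  next
    fix u assume "u \<ge> t1" "f u > M" thus "f' u \<le> 0" using neg[of u] t1 d by auto
  qed (use t1 that in auto)
  thus ?thesis using t1 by auto
next
  case False
  hence allgt: "\<And>t. t \<ge> a \<Longrightarrow> f t > M" by auto
  define t where "t = a + (f a - M) / d + 1"
  have ta: "t \<ge> a" using allgt[of a] d by (simp add: t_def)
  have "f t + d * t \<le> f a + d * a"
  proof (rule barrier[where a=a and f="\<lambda>t. f t + d * t" and f'="\<lambda>t. f' t + d"])
    fix u assume "u \<ge> a"
    show "((\<lambda>t. f t + d * t) has_real_derivative f' u + d) (at u within {a..})"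
      using der[OF \<open>u \<ge> a\<close>] by (auto intro!: derivative_eq_intros)
  next
    fix u assume "u \<ge> a"
    thus "f' u + d \<le> 0" using neg[of u] allgt[of u] by auto
  qed (use ta in auto)
  hence "f t \<le> f a - d * (t - a)" by (simp add: algebra_simps)
  also have "d * (t - a) = f a - M + d" using d by (simp add: t_def field_simps)
  finally have "f t < M" using d by simp
  thus ?thesis using allgt[OF ta] by simp
qed

lemma mvt_within:
  fixes g g' :: "real \<Rightarrow> real"
  assumes "a \<le> u" "{a..u} \<subseteq> S" "\<And>v. v \<in> {a..u} \<Longrightarrow> (g has_real_derivative g' v) (at v within S)"
  shows "\<exists>\<xi>\<in>{a..u}. g u - g a = g' \<xi> * (u - a)"
proof -
  have "\<exists>\<xi>\<in>{a..u}. g u - g a = (\<lambda>h. g' \<xi> * h) (u - a)"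
  proof (rule mvt_very_simple[OF assms(1)])
    fix v assume "a \<le> v" "v \<le> u"
    hence "(g has_real_derivative g' v) (at v within {a..u})"
      using assms(3)[of v] assms(2) by (auto intro: DERIV_subset)
    thus "(g has_derivative (\<lambda>h. g' v * h)) (at v within {a..u})"
      by (simp add: has_field_derivative_def)
  qed
  thus ?thesis by simp
qed

lemma lip1:
  fixes a b a' b' C :: real
  assumes "\<bar>a\<bar> \<le> C" "\<bar>b\<bar> \<le> C" "\<bar>a'\<bar> \<le> C" "\<bar>b'\<bar> \<le> C"
  shows "\<bar>(a * (1 - a) - b * a) - (a' * (1 - a') - b' * a')\<bar> \<le> (1 + 3 * C) * (\<bar>a - a'\<bar> + \<bar>b - b'\<bar>)"
proof -
  have eq: "(a * (1 - a) - b * a) - (a' * (1 - a') - b' * a') = (a - a') * (1 - a - a' - b') - (b - b') * a"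
    by (simp add: algebra_simps)
  have C0: "C \<ge> 0" using assms(1) by simp
  have "\<bar>(a - a') * (1 - a - a' - b')\<bar> \<le> \<bar>a - a'\<bar> * (1 + 3 * C)"
    unfolding abs_mult by (rule mult_left_mono) (use assms in auto)
  moreover have "\<bar>(b - b') * a\<bar> \<le> \<bar>b - b'\<bar> * (1 + 3 * C)"
    unfolding abs_mult by (rule mult_left_mono) (use assms in auto)
  ultimately show ?thesis unfolding eq by (simp add: algebra_simps) (smt (verit) abs_triangle_ineq4)
qed

lemma lip2:
  fixes b b' c c' d d' C s K :: real
  assumes "\<bar>c\<bar> \<le> C" "\<bar>d'\<bar> \<le> C"
  shows "\<bar>(- s * b + K * d * c) - (- s * b' + K * d' * c')\<bar> \<le> \<bar>s\<bar> * \<bar>b - b'\<bar> + \<bar>K\<bar> * C * (\<bar>c - c'\<bar> + \<bar>d - d'\<bar>)"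
proof -
  have eq: "(- s * b + K * d * c) - (- s * b' + K * d' * c') = - s * (b - b') + K * ((d - d') * c + d' * (c - c'))"
    by (simp add: algebra_simps)
  have "\<bar>(d - d') * c + d' * (c - c')\<bar> \<le> C * (\<bar>c - c'\<bar> + \<bar>d - d'\<bar>)"
  proof -
    have "\<bar>(d - d') * c\<bar> \<le> \<bar>d - d'\<bar> * C" unfolding abs_mult by (rule mult_left_mono) (use assms in auto)
    moreover have "\<bar>d' * (c - c')\<bar> \<le> C * \<bar>c - c'\<bar>" unfolding abs_mult by (rule mult_right_mono) (use assms in auto)
    ultimately show ?thesis by (simp add: algebra_simps)
  qed
  hence "\<bar>K * ((d - d') * c + d' * (c - c'))\<bar> \<le> \<bar>K\<bar> * (C * (\<bar>c - c'\<bar> + \<bar>d - d'\<bar>))"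
    unfolding abs_mult by (rule mult_left_mono) auto
  moreover have "\<bar>- s * (b - b')\<bar> = \<bar>s\<bar> * \<bar>b - b'\<bar>" by (simp add: abs_mult)
  ultimately show ?thesis unfolding eq by (smt (verit) abs_triangle_ineq mult.assoc)
qed

lemma dde_unique:
  assumes tau: "tau \<ge> 0" and S1: "dde_solution s Y tau \<phi> \<psi> x y"
    and S2: "dde_solution s Y tau \<phi> \<psi> x' y'" and tt: "t \<ge> -tau"
  shows "x t = x' t \<and> y t = y' t"
proof (cases "t \<le> 0")
  case True thus ?thesis using S1 S2 tt by (auto simp: dde_solution_def)
next
  case False
  hence t0: "t > 0" by simp
  define K where "K = Y * exp (- s * tau)"
  have cx: "continuous_on {-tau..} x" and cy: "continuous_on {-tau..} y"
    and ini1: "\<And>u. u \<in> {-tau..0} \<Longrightarrow> x u = \<phi> u \<and> y u = \<psi> u"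
    and dx: "\<And>u. u \<ge> 0 \<Longrightarrow> (x has_real_derivative (x u * (1 - x u) - y u * x u)) (at u within {0..})"
    and dy: "\<And>u. u \<ge> 0 \<Longrightarrow> (y has_real_derivative (- s * y u + K * y (u - tau) * x (u - tau))) (at u within {0..})"
    using S1 by (auto simp: dde_solution_def K_def)
  have cx': "continuous_on {-tau..} x'" and cy': "continuous_on {-tau..} y'"
    and ini2: "\<And>u. u \<in> {-tau..0} \<Longrightarrow> x' u = \<phi> u \<and> y' u = \<psi> u"
    and dx': "\<And>u. u \<ge> 0 \<Longrightarrow> (x' has_real_derivative (x' u * (1 - x' u) - y' u * x' u)) (at u within {0..})"
    and dy': "\<And>u. u \<ge> 0 \<Longrightarrow> (y' has_real_derivative (- s * y' u + K * y' (u - tau) * x' (u - tau))) (at u within {0..})"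
    using S2 by (auto simp: dde_solution_def K_def)
  have bnd: "\<exists>B. \<forall>u\<in>{-tau..t}. \<bar>f u\<bar> \<le> B" if "continuous_on {-tau..} f" for f :: "real \<Rightarrow> real"
  proof -
    have "compact (f ` {-tau..t})"
      by (rule compact_continuous_image) (use continuous_on_subset[OF that] in auto)
    then obtain B where "\<forall>z\<in>f ` {-tau..t}. norm z \<le> B" by (meson compact_imp_bounded bounded_iff)
    thus ?thesis by auto
  qed
  obtain B1 where B1: "\<forall>u\<in>{-tau..t}. \<bar>x u\<bar> \<le> B1" using bnd[OF cx] by auto
  obtain B2 where B2: "\<forall>u\<in>{-tau..t}. \<bar>y u\<bar> \<le> B2" using bnd[OF cy] by auto
  obtain B3 where B3: "\<forall>u\<in>{-tau..t}. \<bar>x' u\<bar> \<le> B3" using bnd[OF cx'] by auto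
  obtain B4 where B4: "\<forall>u\<in>{-tau..t}. \<bar>y' u\<bar> \<le> B4" using bnd[OF cy'] by auto
  define C where "C = max 0 (max (max B1 B2) (max B3 B4))"
  have C0: "C \<ge> 0" by (simp add: C_def)
  have CB: "\<bar>x u\<bar> \<le> C" "\<bar>y u\<bar> \<le> C" "\<bar>x' u\<bar> \<le> C" "\<bar>y' u\<bar> \<le> C" if "-tau \<le> u" "u \<le> t" for u
    using B1 B2 B3 B4 that unfolding C_def by force+
  define D where "D u = \<bar>x u - x' u\<bar> + \<bar>y u - y' u\<bar>" for u
  define L where "L = 1 + 3 * C + \<bar>s\<bar> + \<bar>K\<bar> * C"
  have L0: "L > 0" using C0 by (simp add: L_def add_pos_nonneg)
  define h where "h = 1 / (4 * L)"
  have h0: "h > 0" using L0 by (simp add: h_def)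
  have Lh: "L * h = 1 / 4" using L0 by (simp add: h_def)
  have D0: "D u = 0" if "-tau \<le> u" "u \<le> 0" for u using ini1[of u] ini2[of u] that by (simp add: D_def)
  have Dnn: "D u \<ge> 0" for u by (simp add: D_def)
  have contD: "continuous_on {-tau..} D"
    unfolding D_def by (intro continuous_intros cx cy cx' cy')
  have derx: "((\<lambda>v. x v - x' v) has_real_derivative
       (x v * (1 - x v) - y v * x v) - (x' v * (1 - x' v) - y' v * x' v)) (at v within {0..})"
    if "v \<ge> 0" for v using dx[OF that] dx'[OF that] by (rule DERIV_diff)
  have dery: "((\<lambda>v. y v - y' v) has_real_derivative
       (- s * y v + K * y (v - tau) * x (v - tau)) - (- s * y' v + K * y' (v - tau) * x' (v - tau))) (at v within {0..})"
    if "v \<ge> 0" for v using dy[OF that] dy'[OF that] by (rule DERIV_diff)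
  have ratex: "\<bar>(x v * (1 - x v) - y v * x v) - (x' v * (1 - x' v) - y' v * x' v)\<bar> \<le> (1 + 3 * C) * D v"
    if "0 \<le> v" "v \<le> t" for v
    unfolding D_def by (rule lip1) (use CB[of v] that tau in auto)
  have ratey: "\<bar>(- s * y v + K * y (v - tau) * x (v - tau)) - (- s * y' v + K * y' (v - tau) * x' (v - tau))\<bar>
      \<le> \<bar>s\<bar> * \<bar>y v - y' v\<bar> + \<bar>K\<bar> * C * D (v - tau)"
    if "0 \<le> v" "v \<le> t" for v
    unfolding D_def by (rule lip2) (use CB[of "v - tau"] that tau in auto)
  have P: "\<forall>u. 0 \<le> u \<longrightarrow> u \<le> t \<longrightarrow> u \<le> real n * h \<longrightarrow> D u = 0" for n
  proof (induction n)
    case 0 thus ?case using D0 tau by auto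
  next
    case (Suc n)
    define a where "a = real n * h"
    have a0: "a \<ge> 0" using h0 by (simp add: a_def)
    have Dz: "D u = 0" if "-tau \<le> u" "u \<le> t" "u \<le> a" for u
      using Suc.IH D0 that by (cases "u \<le> 0") (auto simp: a_def)
    show ?case
    proof (cases "t \<le> a")
      case True thus ?thesis using Dz tau by auto
    next
      case False
      define b where "b = min (a + h) t"
      have ab: "a < b" using False h0 by (simp add: b_def)
      have bt: "b \<le> t" "b \<le> a + h" by (auto simp: b_def)
      have cDab: "continuous_on {a..b} D" using contD by (rule continuous_on_subset) (use a0 tau in auto)
      obtain t1 where t1: "t1 \<in> {a..b}" "\<forall>u\<in>{a..b}. D u \<le> D t1"
        using continuous_attains_sup[OF compact_Icc _ cDab] ab by auto
      define M where "M = D t1"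
      have M0: "M \<ge> 0" by (simp add: M_def Dnn)
      have Da: "D a = 0" using Dz[of a] a0 tau ab bt by auto
      have key: "D u \<le> M / 4" if u: "u \<in> {a..b}" for u
      proof -
        have "\<exists>\<xi>\<in>{a..u}. (x u - x' u) - (x a - x' a) =
            ((x \<xi> * (1 - x \<xi>) - y \<xi> * x \<xi>) - (x' \<xi> * (1 - x' \<xi>) - y' \<xi> * x' \<xi>)) * (u - a)"
          by (rule mvt_within[where S="{0..}"]) (use u a0 derx in auto)
        then obtain \<xi> where \<xi>: "\<xi> \<in> {a..u}" "(x u - x' u) - (x a - x' a) =
            ((x \<xi> * (1 - x \<xi>) - y \<xi> * x \<xi>) - (x' \<xi> * (1 - x' \<xi>) - y' \<xi> * x' \<xi>)) * (u - a)" by blast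
        have "\<exists>\<xi>\<in>{a..u}. (y u - y' u) - (y a - y' a) =
            ((- s * y \<xi> + K * y (\<xi> - tau) * x (\<xi> - tau)) - (- s * y' \<xi> + K * y' (\<xi> - tau) * x' (\<xi> - tau))) * (u - a)"
          by (rule mvt_within[where S="{0..}"]) (use u a0 dery in auto)
        then obtain \<eta> where \<eta>: "\<eta> \<in> {a..u}" "(y u - y' u) - (y a - y' a) =
            ((- s * y \<eta> + K * y (\<eta> - tau) * x (\<eta> - tau)) - (- s * y' \<eta> + K * y' (\<eta> - tau) * x' (\<eta> - tau))) * (u - a)" by blast
        have xa: "x a - x' a = 0" "y a - y' a = 0" using Da unfolding D_def by auto
        have uah: "0 \<le> u - a" "u - a \<le> h" using u bt by auto
        have Dxi: "D \<xi> \<le> M" using t1 \<xi> u unfolding M_def by auto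
        have Deta: "D \<eta> \<le> M" using t1 \<eta> u unfolding M_def by auto
        have Deta2: "D (\<eta> - tau) \<le> M"
        proof (cases "\<eta> - tau \<le> a")
          case True thus ?thesis using Dz[of "\<eta> - tau"] M0 \<eta> u bt a0 by auto
        next
          case False thus ?thesis using t1 \<eta> u tau unfolding M_def by auto
        qed
        have r1: "\<bar>(x \<xi> * (1 - x \<xi>) - y \<xi> * x \<xi>) - (x' \<xi> * (1 - x' \<xi>) - y' \<xi> * x' \<xi>)\<bar> \<le> (1 + 3 * C) * M"
          using ratex[of \<xi>] \<xi> u a0 bt Dxi C0 by (smt (verit) atLeastAtMost_iff mult_left_mono)
        have "\<bar>y \<eta> - y' \<eta>\<bar> \<le> M" using Deta unfolding D_def by simp
        hence r2: "\<bar>(- s * y \<eta> + K * y (\<eta> - tau) * x (\<eta> - tau)) - (- s * y' \<eta> + K * y' (\<eta> - tau) * x' (\<eta> - tau))\<bar>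
            \<le> (\<bar>s\<bar> + \<bar>K\<bar> * C) * M"
          using ratey[of \<eta>] \<eta> u a0 bt Deta2 C0
          by (smt (verit, best) atLeastAtMost_iff distrib_right mult_left_mono abs_ge_zero mult_nonneg_nonneg)
        have "\<bar>x u - x' u\<bar> \<le> ((1 + 3 * C) * M) * h"
          using \<xi>(2) xa r1 uah by (simp add: abs_mult) (smt (verit) mult_mono abs_ge_zero)
        moreover have "\<bar>y u - y' u\<bar> \<le> ((\<bar>s\<bar> + \<bar>K\<bar> * C) * M) * h"
          using \<eta>(2) xa r2 uah by (simp add: abs_mult) (smt (verit) mult_mono abs_ge_zero)
        ultimately have "D u \<le> (L * h) * M" unfolding D_def L_def by (simp add: algebra_simps)
        thus ?thesis using Lh by simp
      qed
      have "M \<le> 0" using key[OF t1(1)] M0 unfolding M_def by simp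
      hence Dab: "D u = 0" if "u \<in> {a..b}" for u using key[OF that] Dnn[of u] by simp
      show ?thesis
      proof (intro allI impI)
        fix u assume "0 \<le> u" "u \<le> t" "u \<le> real (Suc n) * h"
        hence "u \<le> b" using bt by (auto simp: b_def a_def algebra_simps)
        thus "D u = 0" using Dz[of u] Dab[of u] \<open>0 \<le> u\<close> \<open>u \<le> t\<close> tau by (cases "u \<le> a") auto
      qed
    qed
  qed
  obtain n where "t / h \<le> real n" using real_arch_simple by blast
  hence "t \<le> real n * h" using h0 by (simp add: field_simps)
  hence "D t = 0" using P[of n] t0 by auto
  thus ?thesis unfolding D_def by auto
qed

lemma weighted_bound:
  fixes g :: "real \<Rightarrow> real"
  assumes lam: "lam > 0" and t: "t \<ge> 0" and a: "a \<ge> 0" and b: "b \<ge> 0"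
    and cg: "continuous_on {0..t} g"
    and gb: "\<And>u. u \<in> {0..t} \<Longrightarrow> \<bar>g u\<bar> \<le> a + b * exp (lam * u)"
  shows "exp (- lam * t) * \<bar>integral {0..t} g\<bar> \<le> (a + b) / lam"
proof -
  have hi: "((\<lambda>u. a + b * exp (lam * u)) has_integral
       ((a * t + b * exp (lam * t) / lam) - (a * 0 + b * exp (lam * 0) / lam))) {0..t}"
  proof (rule fundamental_theorem_of_calculus[OF t])
    fix u assume "u \<in> {0..t}"
    have "((\<lambda>u. a * u + b * exp (lam * u) / lam) has_real_derivative a + b * exp (lam * u)) (at u within {0..t})"
      using lam by (auto intro!: derivative_eq_intros simp: field_simps)
    thus "((\<lambda>u. a * u + b * exp (lam * u) / lam) has_vector_derivative a + b * exp (lam * u)) (at u within {0..t})"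
      by (simp add: has_real_derivative_iff_has_vector_derivative)
  qed
  have I: "integral {0..t} (\<lambda>u. a + b * exp (lam * u)) = a * t + b * (exp (lam * t) - 1) / lam"
    using integral_unique[OF hi] by (simp add: diff_divide_distrib right_diff_distrib)
  have E: "exp (- lam * t) * exp (lam * t) = 1" by (simp add: exp_minus)
  have "\<bar>integral {0..t} g\<bar> \<le> integral {0..t} (\<lambda>u. a + b * exp (lam * u))"
    using integral_norm_bound_integral[of g "{0..t}" "\<lambda>u. a + b * exp (lam * u)"]
      integrable_continuous_real[OF cg] hi gb by (auto simp: has_integral_integrable)
  hence "exp (- lam * t) * \<bar>integral {0..t} g\<bar> \<le> exp (- lam * t) * (a * t + b * (exp (lam * t) - 1) / lam)"
    unfolding I by (rule mult_left_mono) simp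
  also have "\<dots> = a * (exp (- lam * t) * t) + b * (exp (- lam * t) * exp (lam * t) - exp (- lam * t)) / lam"
    by (simp add: field_simps)
  also have "\<dots> = a * (exp (- lam * t) * t) + b * (1 - exp (- lam * t)) / lam"
    using E by simp
  also have "\<dots> \<le> a * (1 / lam) + b * 1 / lam"
  proof (rule add_mono)
    have "lam * t \<le> exp (lam * t)" using exp_ge_add_one_self[of "lam * t"] by linarith
    hence "exp (- lam * t) * t \<le> 1 / lam" using lam by (simp add: exp_minus field_simps)
    thus "a * (exp (- lam * t) * t) \<le> a * (1 / lam)" using a by (rule mult_left_mono)
    show "b * (1 - exp (- lam * t)) / lam \<le> b * 1 / lam"
      using lam b by (intro divide_right_mono mult_left_mono) auto
  qed
  finally show ?thesis by (simp add: add_divide_distrib)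
qed

lemma deriv_integral0:
  fixes g :: "real \<Rightarrow> real"
  assumes cg: "continuous_on {0..} g" and t: "t \<ge> 0"
  shows "((\<lambda>v. integral {0..v} g) has_real_derivative g t) (at t within {0..})"
proof -
  have "((\<lambda>v. integral {0..v} g) has_real_derivative g t) (at t within {0..t+1})"
    by (rule integral_has_real_derivative) (use cg t in \<open>auto intro: continuous_on_subset\<close>)
  moreover have "at t within {0..t+1} = at t within {0..}"
    by (rule at_within_nhd[of _ "{-1<..<t+1}"]) (use t in auto)
  ultimately show ?thesis by simp
qed

lemma cont_integral_clamp:
  fixes g :: "real \<Rightarrow> real"
  assumes cg: "continuous_on {0..} g"
  shows "continuous_on UNIV (\<lambda>t. integral {0..max 0 t} g)"
proof -
  have "isCont (\<lambda>t. integral {0..max 0 t} g) t" for t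
  proof -
    define r where "r = \<bar>t\<bar> + 1"
    have "continuous_on {0..r} (\<lambda>v. integral {0..v} g)"
      by (rule indefinite_integral_continuous_1, rule integrable_continuous_real)
         (use cg in \<open>auto intro: continuous_on_subset\<close>)
    hence "continuous_on {-r<..<r} ((\<lambda>v. integral {0..v} g) \<circ> (\<lambda>t. max 0 t))"
      by (intro continuous_on_compose continuous_intros, rule continuous_on_subset)
         (auto simp: r_def)
    moreover have "t \<in> {-r<..<r}" by (auto simp: r_def)
    ultimately show ?thesis
      using continuous_on_eq_continuous_at[OF open_greaterThanLessThan, of "-r" r "\<lambda>t. integral {0..max 0 t} g"]
      by (simp add: o_def)
  qed
  thus ?thesis by (simp add: continuous_at_imp_continuous_on)
qed

type_synonym bpair = "(real \<Rightarrow>\<^sub>C real) \<times> (real \<Rightarrow>\<^sub>C real)"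

lemma bc_diff_le: "\<bar>apply_bcontfun f u - apply_bcontfun g u\<bar> \<le> dist f g"
  for f g :: "real \<Rightarrow>\<^sub>C real"
  using dist_bounded[of f u g] by (simp add: dist_real_def)

lemma bc_abs_le: "\<bar>apply_bcontfun f u\<bar> \<le> norm f"
  for f :: "real \<Rightarrow>\<^sub>C real"
  using norm_bounded[of f u] by simp

lemma dde_exist_lip:
  fixes F1 :: "real \<Rightarrow> real \<Rightarrow> real" and F2 :: "real \<Rightarrow> real \<Rightarrow> real \<Rightarrow> real"
    and \<phi> \<psi> :: "real \<Rightarrow> real"
  assumes tau: "tau \<ge> 0" and cphi: "continuous_on {-tau..0} \<phi>" and cpsi: "continuous_on {-tau..0} \<psi>"
    and L0: "L \<ge> 0"
    and Lip1: "\<And>a b a' b'. \<bar>F1 a b - F1 a' b'\<bar> \<le> L * (\<bar>a - a'\<bar> + \<bar>b - b'\<bar>)"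
    and Lip2: "\<And>b c d b' c' d'. \<bar>F2 b c d - F2 b' c' d'\<bar> \<le> L * (\<bar>b - b'\<bar> + \<bar>c - c'\<bar> + \<bar>d - d'\<bar>)"
    and C1: "\<And>(S::real set) p q. continuous_on S p \<Longrightarrow> continuous_on S q \<Longrightarrow> continuous_on S (\<lambda>u. F1 (p u) (q u))"
    and C2: "\<And>(S::real set) p q r. continuous_on S p \<Longrightarrow> continuous_on S q \<Longrightarrow> continuous_on S r \<Longrightarrow>
               continuous_on S (\<lambda>u. F2 (p u) (q u) (r u))"
  shows "\<exists>x y. continuous_on {-tau..} x \<and> continuous_on {-tau..} y \<and>
     (\<forall>t\<in>{-tau..0}. x t = \<phi> t \<and> y t = \<psi> t) \<and>
     (\<forall>t\<ge>0. (x has_real_derivative F1 (x t) (y t)) (at t within {0..}) \<and>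
             (y has_real_derivative F2 (y t) (x (t - tau)) (y (t - tau))) (at t within {0..}))"
proof -
  have bnd: "\<exists>B. \<forall>u\<in>{-tau..0}. \<bar>f u\<bar> \<le> B" if "continuous_on {-tau..0} f" for f :: "real \<Rightarrow> real"
  proof -
    have "compact (f ` {-tau..0})" by (rule compact_continuous_image[OF that]) simp
    then obtain B where "\<forall>z\<in>f ` {-tau..0}. norm z \<le> B" by (meson compact_imp_bounded bounded_iff)
    thus ?thesis by auto
  qed
  obtain P1 where P1: "\<forall>u\<in>{-tau..0}. \<bar>\<phi> u\<bar> \<le> P1" using bnd[OF cphi] by auto
  obtain P2 where P2: "\<forall>u\<in>{-tau..0}. \<bar>\<psi> u\<bar> \<le> P2" using bnd[OF cpsi] by auto
  define P where "P = max 0 (max P1 P2)"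
  have P0: "P \<ge> 0" by (simp add: P_def)
  have Pphi: "\<bar>\<phi> u\<bar> \<le> P" "\<bar>\<psi> u\<bar> \<le> P" if "-tau \<le> u" "u \<le> 0" for u
    using P1 P2 that unfolding P_def by force+
  define lam where "lam = 24 * L + 1"
  have lam0: "lam > 0" using L0 by (simp add: lam_def)
  define X where "X p u = exp (lam * u) * (apply_bcontfun (fst p) u - apply_bcontfun (fst p) 0 + \<phi> 0)"
    for p :: bpair and u
  define Yv where "Yv p u = exp (lam * u) * (apply_bcontfun (snd p) u - apply_bcontfun (snd p) 0 + \<psi> 0)"
    for p :: bpair and u
  define hx where "hx p v = (if v \<le> 0 then \<phi> v else X p v)" for p v
  define hy where "hy p v = (if v \<le> 0 then \<psi> v else Yv p v)" for p v
  define g1 where "g1 p u = F1 (X p u) (Yv p u)" for p u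
  define g2 where "g2 p u = F2 (Yv p u) (hx p (u - tau)) (hy p (u - tau))" for p u
  define O1 where "O1 p t = exp (- lam * max 0 t) * (\<phi> 0 + integral {0..max 0 t} (g1 p))" for p t
  define O2 where "O2 p t = exp (- lam * max 0 t) * (\<psi> 0 + integral {0..max 0 t} (g2 p))" for p t

  have cX: "continuous_on S (X p)" "continuous_on S (Yv p)" for S p
    unfolding X_def Yv_def by (intro continuous_intros continuous_on_apply_bcontfun)+
  have X0: "X p 0 = \<phi> 0" "Yv p 0 = \<psi> 0" for p by (simp_all add: X_def Yv_def)
  have hxX: "hx p v = X p v" "hy p v = Yv p v" if "v \<ge> 0" for p v
    using that X0 by (auto simp: hx_def hy_def)
  have chx: "continuous_on {-tau..} (hx p)" "continuous_on {-tau..} (hy p)" for p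
  proof -
    have U: "{-tau..} = {-tau..0} \<union> {0..}" using tau by auto
    show "continuous_on {-tau..} (hx p)" unfolding U hx_def
      by (rule continuous_on_cases) (use cphi cX[of _ p] X0[of p] in auto)
    show "continuous_on {-tau..} (hy p)" unfolding U hy_def
      by (rule continuous_on_cases) (use cpsi cX[of _ p] X0[of p] in auto)
  qed
  have chx': "continuous_on {0..} (\<lambda>u. hx p (u - tau))" "continuous_on {0..} (\<lambda>u. hy p (u - tau))" for p
    by (rule continuous_on_compose2[OF chx(1)] continuous_on_compose2[OF chx(2)],
        (intro continuous_intros), auto)+
  have cg1: "continuous_on {0..} (g1 p)" for p
    unfolding g1_def by (rule C1[OF cX(1) cX(2)])
  have cg2: "continuous_on {0..} (g2 p)" for p
    unfolding g2_def by (rule C2[OF cX(2) chx'(1) chx'(2)])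
  note cg = cg1 cg2
  have bX: "\<bar>X p u\<bar> \<le> exp (lam * u) * (2 * norm (fst p) + \<bar>\<phi> 0\<bar>)"
     "\<bar>Yv p u\<bar> \<le> exp (lam * u) * (2 * norm (snd p) + \<bar>\<psi> 0\<bar>)" for p u
  proof -
    have "\<bar>apply_bcontfun (fst p) u - apply_bcontfun (fst p) 0 + \<phi> 0\<bar> \<le> 2 * norm (fst p) + \<bar>\<phi> 0\<bar>"
      using bc_abs_le[of "fst p" u] bc_abs_le[of "fst p" 0] by linarith
    thus "\<bar>X p u\<bar> \<le> exp (lam * u) * (2 * norm (fst p) + \<bar>\<phi> 0\<bar>)"
      unfolding X_def abs_mult by (simp add: mult_left_mono)
    have "\<bar>apply_bcontfun (snd p) u - apply_bcontfun (snd p) 0 + \<psi> 0\<bar> \<le> 2 * norm (snd p) + \<bar>\<psi> 0\<bar>"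
      using bc_abs_le[of "snd p" u] bc_abs_le[of "snd p" 0] by linarith
    thus "\<bar>Yv p u\<bar> \<le> exp (lam * u) * (2 * norm (snd p) + \<bar>\<psi> 0\<bar>)"
      unfolding Yv_def abs_mult by (simp add: mult_left_mono)
  qed
  have bhx: "\<bar>hx p v\<bar> \<le> P + exp (lam * u) * (2 * norm (fst p) + \<bar>\<phi> 0\<bar>)"
     "\<bar>hy p v\<bar> \<le> P + exp (lam * u) * (2 * norm (snd p) + \<bar>\<psi> 0\<bar>)"
    if "-tau \<le> v" "v \<le> u" for p u v
  proof -
    have e: "exp (lam * v) \<le> exp (lam * u)" using that lam0 by simp
    have n: "0 \<le> 2 * norm (fst p) + \<bar>\<phi> 0\<bar>" "0 \<le> 2 * norm (snd p) + \<bar>\<psi> 0\<bar>" by auto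
    have "exp (lam * v) * (2 * norm (fst p) + \<bar>\<phi> 0\<bar>) \<le> exp (lam * u) * (2 * norm (fst p) + \<bar>\<phi> 0\<bar>)"
      using e n by (simp add: mult_right_mono)
    moreover have "0 \<le> exp (lam * u) * (2 * norm (fst p) + \<bar>\<phi> 0\<bar>)" using n by simp
    ultimately show "\<bar>hx p v\<bar> \<le> P + exp (lam * u) * (2 * norm (fst p) + \<bar>\<phi> 0\<bar>)"
      using bX(1)[of p v] Pphi(1)[of v] that P0 unfolding hx_def by auto
    have "exp (lam * v) * (2 * norm (snd p) + \<bar>\<psi> 0\<bar>) \<le> exp (lam * u) * (2 * norm (snd p) + \<bar>\<psi> 0\<bar>)"
      using e n by (simp add: mult_right_mono)
    moreover have "0 \<le> exp (lam * u) * (2 * norm (snd p) + \<bar>\<psi> 0\<bar>)" using n by simp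
    ultimately show "\<bar>hy p v\<bar> \<le> P + exp (lam * u) * (2 * norm (snd p) + \<bar>\<psi> 0\<bar>)"
      using bX(2)[of p v] Pphi(2)[of v] that P0 unfolding hy_def by auto
  qed
  have bg: "\<exists>a b. a \<ge> 0 \<and> b \<ge> 0 \<and> (\<forall>u\<ge>0. \<bar>g1 p u\<bar> \<le> a + b * exp (lam * u) \<and> \<bar>g2 p u\<bar> \<le> a + b * exp (lam * u))"
    for p
  proof -
    define cx where "cx = 2 * norm (fst p) + \<bar>\<phi> 0\<bar>"
    define cy where "cy = 2 * norm (snd p) + \<bar>\<psi> 0\<bar>"
    have cxy: "cx \<ge> 0" "cy \<ge> 0" by (auto simp: cx_def cy_def)
    define a where "a = \<bar>F1 0 0\<bar> + \<bar>F2 0 0 0\<bar> + 2 * L * P"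
    define b where "b = L * (2 * cx + 2 * cy)"
    have a0: "a \<ge> 0" and b0: "b \<ge> 0" using P0 L0 cxy by (auto simp: a_def b_def)
    have "\<bar>g1 p u\<bar> \<le> a + b * exp (lam * u) \<and> \<bar>g2 p u\<bar> \<le> a + b * exp (lam * u)" if u: "u \<ge> 0" for u
    proof
      have "\<bar>g1 p u\<bar> \<le> \<bar>F1 0 0\<bar> + L * (\<bar>X p u\<bar> + \<bar>Yv p u\<bar>)"
        using Lip1[of "X p u" "Yv p u" 0 0] unfolding g1_def by simp
      also have "\<dots> \<le> \<bar>F1 0 0\<bar> + L * (exp (lam * u) * cx + exp (lam * u) * cy)"
        using bX[of p u] L0 unfolding cx_def cy_def by (intro add_left_mono mult_left_mono add_mono) auto
      also have "\<dots> \<le> a + b * exp (lam * u)"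
        using L0 cxy P0 unfolding a_def b_def
        by (simp add: algebra_simps; smt (verit) exp_gt_zero mult_nonneg_nonneg)
      finally show "\<bar>g1 p u\<bar> \<le> a + b * exp (lam * u)" .
      have "\<bar>g2 p u\<bar> \<le> \<bar>F2 0 0 0\<bar> + L * (\<bar>Yv p u\<bar> + \<bar>hx p (u - tau)\<bar> + \<bar>hy p (u - tau)\<bar>)"
        using Lip2[of "Yv p u" "hx p (u - tau)" "hy p (u - tau)" 0 0 0] unfolding g2_def by simp
      also have "\<dots> \<le> \<bar>F2 0 0 0\<bar> + L * (exp (lam * u) * cy + (P + exp (lam * u) * cx) + (P + exp (lam * u) * cy))"
        using bX(2)[of p u] bhx[of "u - tau" u p] L0 u tau unfolding cx_def cy_def
        by (intro add_left_mono mult_left_mono add_mono) auto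
      also have "\<dots> \<le> a + b * exp (lam * u)"
        using L0 cxy P0 unfolding a_def b_def
        by (simp add: algebra_simps; smt (verit) exp_gt_zero mult_nonneg_nonneg)
      finally show "\<bar>g2 p u\<bar> \<le> a + b * exp (lam * u)" .
    qed
    thus ?thesis using a0 b0 by blast
  qed
  have Obnd: "O1 p \<in> bcontfun \<and> O2 p \<in> bcontfun" for p
  proof -
    obtain a b where ab: "a \<ge> 0" "b \<ge> 0"
      "\<And>u. u \<ge> 0 \<Longrightarrow> \<bar>g1 p u\<bar> \<le> a + b * exp (lam * u) \<and> \<bar>g2 p u\<bar> \<le> a + b * exp (lam * u)"
      using bg[of p] by blast
    have "O1 p \<in> bcontfun"
    proof (rule bcontfun_normI)
      show "continuous_on UNIV (O1 p)" unfolding O1_def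
        by (intro continuous_intros cont_integral_clamp cg1[of p] cg2[of p]; simp)
      fix t :: real
      define t' where "t' = max 0 t"
      have t': "t' \<ge> 0" unfolding t'_def by (rule max.cobounded1)
      have "exp (- lam * t') * \<bar>integral {0..t'} (g1 p)\<bar> \<le> (a + b) / lam"
        by (rule weighted_bound[OF lam0 t' ab(1,2)]) (use cg1[of p] ab(3) in \<open>auto intro: continuous_on_subset\<close>)
      moreover have "exp (- lam * t') \<le> 1" using t' lam0 by simp
      hence "exp (- lam * t') * \<bar>\<phi> 0\<bar> \<le> \<bar>\<phi> 0\<bar>" by (simp add: mult_left_le_one_le)
      moreover have "norm (O1 p t) \<le> exp (- lam * t') * \<bar>\<phi> 0\<bar> + exp (- lam * t') * \<bar>integral {0..t'} (g1 p)\<bar>"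
      proof -
        have "norm (O1 p t) = exp (- lam * t') * \<bar>\<phi> 0 + integral {0..t'} (g1 p)\<bar>"
          by (simp add: O1_def t'_def abs_mult)
        also have "\<dots> \<le> exp (- lam * t') * (\<bar>\<phi> 0\<bar> + \<bar>integral {0..t'} (g1 p)\<bar>)"
          by (rule mult_left_mono) (auto intro: abs_triangle_ineq)
        finally show ?thesis by (simp add: distrib_left)
      qed
      ultimately show "norm (O1 p t) \<le> \<bar>\<phi> 0\<bar> + (a + b) / lam" by linarith
    qed
    moreover have "O2 p \<in> bcontfun"
    proof (rule bcontfun_normI)
      show "continuous_on UNIV (O2 p)" unfolding O2_def
        by (intro continuous_intros cont_integral_clamp cg1[of p] cg2[of p]; simp)
      fix t :: real
      define t' where "t' = max 0 t"
      have t': "t' \<ge> 0" unfolding t'_def by (rule max.cobounded1)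
      have "exp (- lam * t') * \<bar>integral {0..t'} (g2 p)\<bar> \<le> (a + b) / lam"
        by (rule weighted_bound[OF lam0 t' ab(1,2)]) (use cg2[of p] ab(3) in \<open>auto intro: continuous_on_subset\<close>)
      moreover have "exp (- lam * t') \<le> 1" using t' lam0 by simp
      hence "exp (- lam * t') * \<bar>\<psi> 0\<bar> \<le> \<bar>\<psi> 0\<bar>" by (simp add: mult_left_le_one_le)
      moreover have "norm (O2 p t) \<le> exp (- lam * t') * \<bar>\<psi> 0\<bar> + exp (- lam * t') * \<bar>integral {0..t'} (g2 p)\<bar>"
      proof -
        have "norm (O2 p t) = exp (- lam * t') * \<bar>\<psi> 0 + integral {0..t'} (g2 p)\<bar>"
          by (simp add: O2_def t'_def abs_mult)
        also have "\<dots> \<le> exp (- lam * t') * (\<bar>\<psi> 0\<bar> + \<bar>integral {0..t'} (g2 p)\<bar>)"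
          by (rule mult_left_mono) (auto intro: abs_triangle_ineq)
        finally show ?thesis by (simp add: distrib_left)
      qed
      ultimately show "norm (O2 p t) \<le> \<bar>\<psi> 0\<bar> + (a + b) / lam" by linarith
    qed
    ultimately show ?thesis by simp
  qed
  define Phi where "Phi p = (Bcontfun (O1 p), Bcontfun (O2 p))" for p
  have appl: "apply_bcontfun (fst (Phi p)) = O1 p" "apply_bcontfun (snd (Phi p)) = O2 p" for p
    using Obnd[of p] by (simp_all add: Phi_def Bcontfun_inverse)
  have contr: "dist (Phi p) (Phi q) \<le> 1/2 * dist p q" for p q
  proof -
    define dd where "dd = dist p q"
    have dd0: "dd \<ge> 0" by (simp add: dd_def)
    have d1: "\<bar>apply_bcontfun (fst p) u - apply_bcontfun (fst q) u\<bar> \<le> dd" for u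
      using bc_diff_le[of "fst p" u "fst q"] dist_fst_le[of p q] by (simp add: dd_def)
    have d2: "\<bar>apply_bcontfun (snd p) u - apply_bcontfun (snd q) u\<bar> \<le> dd" for u
      using bc_diff_le[of "snd p" u "snd q"] dist_snd_le[of p q] by (simp add: dd_def)
    have dX: "\<bar>X p u - X q u\<bar> \<le> 2 * dd * exp (lam * u)" for u
    proof -
      have "X p u - X q u = exp (lam * u) * ((apply_bcontfun (fst p) u - apply_bcontfun (fst q) u)
             - (apply_bcontfun (fst p) 0 - apply_bcontfun (fst q) 0))"
        by (simp add: X_def algebra_simps)
      hence "\<bar>X p u - X q u\<bar> = exp (lam * u) * \<bar>(apply_bcontfun (fst p) u - apply_bcontfun (fst q) u)
             - (apply_bcontfun (fst p) 0 - apply_bcontfun (fst q) 0)\<bar>" by (simp add: abs_mult)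
      also have "\<dots> \<le> exp (lam * u) * (2 * dd)"
        using d1[of u] d1[of 0] by (intro mult_left_mono) auto
      finally show ?thesis by (simp add: algebra_simps)
    qed
    have dY: "\<bar>Yv p u - Yv q u\<bar> \<le> 2 * dd * exp (lam * u)" for u
    proof -
      have "Yv p u - Yv q u = exp (lam * u) * ((apply_bcontfun (snd p) u - apply_bcontfun (snd q) u)
             - (apply_bcontfun (snd p) 0 - apply_bcontfun (snd q) 0))"
        by (simp add: Yv_def algebra_simps)
      hence "\<bar>Yv p u - Yv q u\<bar> = exp (lam * u) * \<bar>(apply_bcontfun (snd p) u - apply_bcontfun (snd q) u)
             - (apply_bcontfun (snd p) 0 - apply_bcontfun (snd q) 0)\<bar>" by (simp add: abs_mult)
      also have "\<dots> \<le> exp (lam * u) * (2 * dd)"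
        using d2[of u] d2[of 0] by (intro mult_left_mono) auto
      finally show ?thesis by (simp add: algebra_simps)
    qed
    have emono: "2 * dd * exp (lam * v) \<le> 2 * dd * exp (lam * u)" if "v \<le> u" for u v
      using that lam0 dd0 by (intro mult_left_mono) auto
    have dhx: "\<bar>hx p v - hx q v\<bar> \<le> 2 * dd * exp (lam * u)" "\<bar>hy p v - hy q v\<bar> \<le> 2 * dd * exp (lam * u)"
      if "v \<le> u" for u v
      using dX[of v] dY[of v] emono[OF that] dd0 unfolding hx_def hy_def by auto
    have dg1: "\<bar>g1 p u - g1 q u\<bar> \<le> 6 * L * dd * exp (lam * u)" for u
    proof -
      have "\<bar>g1 p u - g1 q u\<bar> \<le> L * (\<bar>X p u - X q u\<bar> + \<bar>Yv p u - Yv q u\<bar>)"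
        unfolding g1_def by (rule Lip1)
      also have "\<dots> \<le> L * (2 * dd * exp (lam * u) + 2 * dd * exp (lam * u))"
        using dX[of u] dY[of u] L0 by (intro mult_left_mono add_mono) auto
      also have "\<dots> \<le> 6 * L * dd * exp (lam * u)"
        using L0 dd0 by (simp add: algebra_simps)
      finally show ?thesis .
    qed
    have dg2: "\<bar>g2 p u - g2 q u\<bar> \<le> 6 * L * dd * exp (lam * u)" for u
    proof -
      have "\<bar>g2 p u - g2 q u\<bar> \<le> L * (\<bar>Yv p u - Yv q u\<bar> + \<bar>hx p (u - tau) - hx q (u - tau)\<bar>
             + \<bar>hy p (u - tau) - hy q (u - tau)\<bar>)"
        unfolding g2_def by (rule Lip2)
      also have "\<dots> \<le> L * (2 * dd * exp (lam * u) + 2 * dd * exp (lam * u) + 2 * dd * exp (lam * u))"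
        using dY[of u] dhx[of "u - tau" u] tau L0 by (intro mult_left_mono add_mono) auto
      also have "\<dots> = 6 * L * dd * exp (lam * u)"
        by (simp add: algebra_simps)
      finally show ?thesis .
    qed
    have b6: "6 * L * dd \<ge> 0" using L0 dd0 by simp
    have dO1: "\<bar>O1 p t - O1 q t\<bar> \<le> (0 + 6 * L * dd) / lam" for t
    proof -
      define t' where "t' = max 0 t"
      have t': "t' \<ge> 0" unfolding t'_def by (rule max.cobounded1)
      have i1: "g1 p integrable_on {0..t'}" "g1 q integrable_on {0..t'}"
        using cg1[of p] cg1[of q] by (auto intro!: integrable_continuous_real intro: continuous_on_subset)
      have "O1 p t - O1 q t = exp (- lam * t') * integral {0..t'} (\<lambda>u. g1 p u - g1 q u)"
        unfolding O1_def t'_def[symmetric] integral_diff[OF i1] by (simp add: algebra_simps)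
      hence "\<bar>O1 p t - O1 q t\<bar> = exp (- lam * t') * \<bar>integral {0..t'} (\<lambda>u. g1 p u - g1 q u)\<bar>"
        by (simp add: abs_mult)
      also have "\<dots> \<le> (0 + 6 * L * dd) / lam"
        by (rule weighted_bound[OF lam0 t' order.refl b6])
           (use cg1[of p] cg1[of q] dg1 in \<open>auto intro!: continuous_intros intro: continuous_on_subset\<close>)
      finally show ?thesis .
    qed
    have dO2: "\<bar>O2 p t - O2 q t\<bar> \<le> (0 + 6 * L * dd) / lam" for t
    proof -
      define t' where "t' = max 0 t"
      have t': "t' \<ge> 0" unfolding t'_def by (rule max.cobounded1)
      have i1: "g2 p integrable_on {0..t'}" "g2 q integrable_on {0..t'}"
        using cg2[of p] cg2[of q] by (auto intro!: integrable_continuous_real intro: continuous_on_subset)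
      have "O2 p t - O2 q t = exp (- lam * t') * integral {0..t'} (\<lambda>u. g2 p u - g2 q u)"
        unfolding O2_def t'_def[symmetric] integral_diff[OF i1] by (simp add: algebra_simps)
      hence "\<bar>O2 p t - O2 q t\<bar> = exp (- lam * t') * \<bar>integral {0..t'} (\<lambda>u. g2 p u - g2 q u)\<bar>"
        by (simp add: abs_mult)
      also have "\<dots> \<le> (0 + 6 * L * dd) / lam"
        by (rule weighted_bound[OF lam0 t' order.refl b6])
           (use cg2[of p] cg2[of q] dg2 in \<open>auto intro!: continuous_intros intro: continuous_on_subset\<close>)
      finally show ?thesis .
    qed
    have D1: "dist (fst (Phi p)) (fst (Phi q)) \<le> (0 + 6 * L * dd) / lam"
      by (rule dist_bound) (simp add: appl dist_real_def dO1[simplified])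
    have D2: "dist (snd (Phi p)) (snd (Phi q)) \<le> (0 + 6 * L * dd) / lam"
      by (rule dist_bound) (simp add: appl dist_real_def dO2[simplified])
    have "dist (Phi p) (Phi q) = sqrt ((dist (fst (Phi p)) (fst (Phi q)))\<^sup>2 + (dist (snd (Phi p)) (snd (Phi q)))\<^sup>2)"
      using dist_Pair_Pair[of "fst (Phi p)" "snd (Phi p)" "fst (Phi q)" "snd (Phi q)"] by simp
    also have "\<dots> \<le> dist (fst (Phi p)) (fst (Phi q)) + dist (snd (Phi p)) (snd (Phi q))"
      by (rule sqrt_sum_squares_le_sum) auto
    also have "\<dots> \<le> 12 * L * dd / lam" using D1 D2 by simp
    also have "\<dots> \<le> 1/2 * dd"
      using lam0 dd0 L0 by (simp add: lam_def field_simps)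
    finally show ?thesis by (simp add: dd_def)
  qed
  obtain p where pfix: "Phi p = p"
    using banach_fix_type[of "1/2" Phi] contr by auto
  have p0: "apply_bcontfun (fst p) 0 = \<phi> 0" "apply_bcontfun (snd p) 0 = \<psi> 0"
    using appl[of p] pfix by (auto simp: O1_def O2_def fun_eq_iff dest: spec[of _ 0])
  have fstp: "apply_bcontfun (fst p) = O1 p" "apply_bcontfun (snd p) = O2 p"
    using appl[of p] pfix by simp_all
  have Xfix: "X p u = \<phi> 0 + integral {0..u} (g1 p)" "Yv p u = \<psi> 0 + integral {0..u} (g2 p)"
    if u: "u \<ge> 0" for u
  proof -
    have e: "exp (lam * u) * exp (- lam * u) = 1" by (simp add: exp_minus)
    have mu: "max 0 u = u" using u by simp
    show "X p u = \<phi> 0 + integral {0..u} (g1 p)"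
      unfolding X_def p0 using e by (simp add: fstp O1_def mu mult.assoc[symmetric])
    show "Yv p u = \<psi> 0 + integral {0..u} (g2 p)"
      unfolding Yv_def p0 using e by (simp add: fstp O2_def mu mult.assoc[symmetric])
  qed
  have derx: "(hx p has_real_derivative F1 (hx p t) (hy p t)) (at t within {0..})"
   and dery: "(hy p has_real_derivative F2 (hy p t) (hx p (t - tau)) (hy p (t - tau))) (at t within {0..})"
    if t: "t \<ge> 0" for t
  proof -
    have "((\<lambda>v. \<phi> 0 + integral {0..v} (g1 p)) has_real_derivative g1 p t) (at t within {0..})"
      using DERIV_add[OF DERIV_const deriv_integral0[OF cg1 t]] by simp
    hence "(hx p has_real_derivative g1 p t) (at t within {0..})"
      by (rule has_field_derivative_transform_within[OF _ zero_less_one])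
         (use t Xfix hxX in auto)
    thus "(hx p has_real_derivative F1 (hx p t) (hy p t)) (at t within {0..})"
      using hxX[OF t] by (simp add: g1_def)
    have "((\<lambda>v. \<psi> 0 + integral {0..v} (g2 p)) has_real_derivative g2 p t) (at t within {0..})"
      using DERIV_add[OF DERIV_const deriv_integral0[OF cg2 t]] by simp
    hence "(hy p has_real_derivative g2 p t) (at t within {0..})"
      by (rule has_field_derivative_transform_within[OF _ zero_less_one])
         (use t Xfix hxX in auto)
    thus "(hy p has_real_derivative F2 (hy p t) (hx p (t - tau)) (hy p (t - tau))) (at t within {0..})"
      using hxX[OF t] by (simp add: g2_def)
  qed
  show ?thesis
  proof (intro exI conjI)
    show "continuous_on {-tau..} (hx p)" "continuous_on {-tau..} (hy p)" by (rule chx)+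
    show "\<forall>t\<in>{-tau..0}. hx p t = \<phi> t \<and> hy p t = \<psi> t" by (auto simp: hx_def hy_def)
    show "\<forall>t\<ge>0. (hx p has_real_derivative F1 (hx p t) (hy p t)) (at t within {0..}) \<and>
        (hy p has_real_derivative F2 (hy p t) (hx p (t - tau)) (hy p (t - tau))) (at t within {0..})"
      using derx dery by blast
  qed
qed

lemma barrier_fin:
  fixes f f' :: "real \<Rightarrow> real"
  assumes der: "\<And>t. a \<le> t \<Longrightarrow> t \<le> b \<Longrightarrow> (f has_real_derivative f' t) (at t within {a..})"
    and init: "f a \<le> M" and neg: "\<And>t. a \<le> t \<Longrightarrow> t \<le> b \<Longrightarrow> f t > M \<Longrightarrow> f' t \<le> 0"
    and tge: "a \<le> t" "t \<le> b"
  shows "f t \<le> M"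
proof (rule ccontr)
  assume "\<not> f t \<le> M" hence ft: "f t > M" by simp
  have cont: "continuous_on {a..t} f"
    unfolding continuous_on_eq_continuous_within
  proof
    fix x assume "x \<in> {a..t}"
    hence "(f has_real_derivative f' x) (at x within {a..t})"
      using der[of x] tge by (auto intro: DERIV_subset)
    thus "continuous (at x within {a..t}) f" by (rule DERIV_continuous)
  qed
  define S where "S = {a..t} \<inter> f -` {..M}"
  have clS: "closed S" unfolding S_def
    by (rule continuous_closed_preimage[OF cont]) auto
  have aS: "a \<in> S" using init tge by (auto simp: S_def)
  have bdd: "bdd_above S" unfolding S_def by (auto intro: bdd_aboveI[where M=t])
  define t0 where "t0 = Sup S"
  have t0S: "t0 \<in> S" unfolding t0_def using closed_contains_Sup[OF _ bdd clS] aS by blast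
  hence t0: "a \<le> t0" "t0 \<le> t" "f t0 \<le> M" by (auto simp: S_def)
  have lt: "t0 < t" using t0 ft by (cases "t0 = t") auto
  have gt: "f x > M" if "t0 < x" "x \<le> t" for x
  proof (rule ccontr)
    assume "\<not> f x > M"
    hence "x \<in> S" using that t0 by (auto simp: S_def)
    hence "x \<le> t0" unfolding t0_def using bdd by (rule cSup_upper)
    thus False using that by simp
  qed
  have "\<exists>x\<in>{t0<..<t}. f t - f t0 = (\<lambda>h. f' x * h) (t - t0)"
  proof (rule mvt_simple[OF lt])
    fix x assume "t0 \<le> x" "x \<le> t"
    hence "(f has_real_derivative f' x) (at x within {t0..t})"
      using der[of x] t0 tge by (auto intro: DERIV_subset)
    thus "(f has_derivative (\<lambda>h. f' x * h)) (at x within {t0..t})"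
      by (simp add: has_field_derivative_def)
  qed
  then obtain x where x: "t0 < x" "x < t" "f t - f t0 = (t - t0) * f' x" by (auto simp: mult.commute)
  have "f' x \<le> 0" using neg[of x] gt[of x] x t0 tge by auto
  hence "(t - t0) * f' x \<le> 0" using lt by (simp add: mult_nonneg_nonpos)
  thus False using x t0 ft by simp
qed

lemma shift_deriv:
  fixes f :: "real \<Rightarrow> real"
  assumes "(f has_real_derivative D) (at (t - c) within {0..})"
  shows "((\<lambda>t. f (t - c)) has_real_derivative D) (at t within {c..})"
proof -
  have "(f has_real_derivative D) (at ((\<lambda>t. t - c) t) within ((\<lambda>t. t - c) ` {c..}))"
    using assms by (rule DERIV_subset) auto
  moreover have "((\<lambda>t. t - c) has_real_derivative 1) (at t within {c..})"
    by (auto intro!: derivative_eq_intros)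
  ultimately have "(f \<circ> (\<lambda>t. t - c) has_real_derivative D * 1) (at t within {c..})"
    by (rule DERIV_image_chain)
  thus ?thesis by (simp add: o_def)
qed

lemma clamp_facts:
  fixes A a :: real
  assumes "A \<ge> 0"
  shows "0 \<le> max 0 (min a A)" "max 0 (min a A) \<le> A"
    "\<bar>max 0 (min a A) - max 0 (min a' A)\<bar> \<le> \<bar>a - a'\<bar>"
    "a < 0 \<Longrightarrow> max 0 (min a A) = 0" "a > A \<Longrightarrow> max 0 (min a A) = A"
    "0 \<le> a \<Longrightarrow> a \<le> A \<Longrightarrow> max 0 (min a A) = a"
  using assms by (auto simp: abs_if max_def min_def)

lemma exist_bounded:
  fixes s Y tau :: real and \<phi> \<psi> :: "real \<Rightarrow> real"
  assumes s: "s > 0" and Y: "Y > 0" and tau: "tau \<ge> 0"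
    and iphi: "init_datum tau \<phi>" and ipsi: "init_datum tau \<psi>"
  shows "\<exists>x y C. dde_solution s Y tau \<phi> \<psi> x y \<and> (\<forall>t\<ge>-tau. 0 \<le> x t \<and> x t \<le> C \<and> 0 \<le> y t \<and> y t \<le> C)"
proof -
  define K where "K = Y * exp (- s * tau)"
  have K0: "K > 0" using Y by (simp add: K_def)
  have cphi: "continuous_on {-tau..0} \<phi>" and phinn: "\<And>u. u \<in> {-tau..0} \<Longrightarrow> \<phi> u \<ge> 0"
    using iphi by (auto simp: init_datum_def)
  have cpsi: "continuous_on {-tau..0} \<psi>" and psinn: "\<And>u. u \<in> {-tau..0} \<Longrightarrow> \<psi> u \<ge> 0"
    using ipsi by (auto simp: init_datum_def)
  have bnd: "\<exists>B. \<forall>u\<in>{-tau..0}. \<bar>f u\<bar> \<le> B" if "continuous_on {-tau..0} f" for f :: "real \<Rightarrow> real"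
  proof -
    have "compact (f ` {-tau..0})" by (rule compact_continuous_image[OF that]) simp
    then obtain B where "\<forall>z\<in>f ` {-tau..0}. norm z \<le> B" by (meson compact_imp_bounded bounded_iff)
    thus ?thesis by auto
  qed
  obtain P1 where P1: "\<forall>u\<in>{-tau..0}. \<bar>\<phi> u\<bar> \<le> P1" using bnd[OF cphi] by auto
  obtain P2 where P2: "\<forall>u\<in>{-tau..0}. \<bar>\<psi> u\<bar> \<le> P2" using bnd[OF cpsi] by auto
  define P where "P = max 0 (max P1 P2)"
  have P0: "P \<ge> 0" by (simp add: P_def)
  have Pb: "\<phi> u \<le> P" "\<psi> u \<le> P" if "u \<in> {-tau..0}" for u
    using P1 P2 that unfolding P_def by force+
  define A where "A = max 1 P"
  have A1: "A \<ge> 1" and AP: "P \<le> A" by (auto simp: A_def)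
  define B0 where "B0 = max P (K * P * A / s)"
  have B0P: "P \<le> B0" and B0K: "K * P * A / s \<le> B0" by (auto simp: B0_def)
  define B where "B = max (K * A + B0) (K / (4 * s) + K * A)"
  have BB0: "K * A + B0 \<le> B" and BK: "K / (4 * s) + K * A \<le> B" by (auto simp: B_def)
  have B0B: "B0 \<le> B" using BB0 K0 A1 by (smt (verit) mult_pos_pos)
  have B0': "B \<ge> 0" using B0B B0P P0 by simp
  define cA where "cA a = max 0 (min a A)" for a :: real
  define cB where "cB b = max 0 (min b B)" for b :: real
  note cAf = clamp_facts[of A, folded cA_def] and cBf = clamp_facts[of B, folded cB_def]
  have A0: "A \<ge> 0" using A1 by simp
  note cAf = cAf[OF A0] and cBf = cBf[OF B0']
  define F1 where "F1 a b = cA a * (1 - cA a - cB b)" for a b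
  define F2 where "F2 b c d = - s * b + K * cB d * cA c" for b c d
  define C where "C = max A B"
  have CA: "A \<le> C" "B \<le> C" by (auto simp: C_def)
  define L where "L = 1 + 3 * C + s + K * C"
  have C0: "C \<ge> 0" using CA A0 by simp
  have L0: "L \<ge> 0" using C0 s K0 by (simp add: L_def)
  have Lip1: "\<bar>F1 a b - F1 a' b'\<bar> \<le> L * (\<bar>a - a'\<bar> + \<bar>b - b'\<bar>)" for a b a' b'
  proof -
    have cb: "\<bar>cA a\<bar> \<le> C" "\<bar>cB b\<bar> \<le> C" "\<bar>cA a'\<bar> \<le> C" "\<bar>cB b'\<bar> \<le> C"
      using cAf(1,2)[of a] cAf(1,2)[of a'] cBf(1,2)[of b] cBf(1,2)[of b'] CA by auto
    have "\<bar>F1 a b - F1 a' b'\<bar> \<le> (1 + 3 * C) * (\<bar>cA a - cA a'\<bar> + \<bar>cB b - cB b'\<bar>)"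
      using lip1[OF cb] unfolding F1_def by (simp add: algebra_simps)
    also have "\<dots> \<le> (1 + 3 * C) * (\<bar>a - a'\<bar> + \<bar>b - b'\<bar>)"
      using cAf(3)[of a a'] cBf(3)[of b b'] C0 by (intro mult_left_mono add_mono) auto
    also have "\<dots> \<le> L * (\<bar>a - a'\<bar> + \<bar>b - b'\<bar>)"
      using s K0 C0 unfolding L_def by (intro mult_right_mono) auto
    finally show ?thesis .
  qed
  have Lip2: "\<bar>F2 b c d - F2 b' c' d'\<bar> \<le> L * (\<bar>b - b'\<bar> + \<bar>c - c'\<bar> + \<bar>d - d'\<bar>)" for b c d b' c' d'
  proof -
    have cb: "\<bar>cA c\<bar> \<le> C" "\<bar>cB d'\<bar> \<le> C"
      using cAf(1,2)[of c] cBf(1,2)[of d'] CA by auto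
    have "\<bar>F2 b c d - F2 b' c' d'\<bar> \<le> \<bar>s\<bar> * \<bar>b - b'\<bar> + \<bar>K\<bar> * C * (\<bar>cA c - cA c'\<bar> + \<bar>cB d - cB d'\<bar>)"
      using lip2[where b=b and b'=b' and c="cA c" and c'="cA c'" and d="cB d" and d'="cB d'" and C=C and s=s and K=K] cb
      unfolding F2_def by simp
    also have "\<dots> \<le> s * \<bar>b - b'\<bar> + K * C * (\<bar>c - c'\<bar> + \<bar>d - d'\<bar>)"
      using cAf(3)[of c c'] cBf(3)[of d d'] C0 K0 s by (intro add_mono mult_left_mono) (auto intro: mult_left_mono)
    also have "\<dots> \<le> L * (\<bar>b - b'\<bar> + \<bar>c - c'\<bar> + \<bar>d - d'\<bar>)"
      using s K0 C0 unfolding L_def by (simp add: algebra_simps mult_nonneg_nonneg add_nonneg_nonneg)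
    finally show ?thesis .
  qed
  have C1: "continuous_on S (\<lambda>u. F1 (p u) (q u))" if "continuous_on S p" "continuous_on S q" for S :: "real set" and p q
    unfolding F1_def cA_def cB_def by (intro continuous_intros that)
  have C2: "continuous_on S (\<lambda>u. F2 (p u) (q u) (r u))"
    if "continuous_on S p" "continuous_on S q" "continuous_on S r" for S :: "real set" and p q r
    unfolding F2_def cA_def cB_def by (intro continuous_intros that)
  obtain x y where cx: "continuous_on {-tau..} x" and cy: "continuous_on {-tau..} y"
    and ini: "\<forall>t\<in>{-tau..0}. x t = \<phi> t \<and> y t = \<psi> t"
    and der: "\<forall>t\<ge>0. (x has_real_derivative F1 (x t) (y t)) (at t within {0..}) \<and>
             (y has_real_derivative F2 (y t) (x (t - tau)) (y (t - tau))) (at t within {0..})"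
    using dde_exist_lip[OF tau cphi cpsi L0 Lip1 Lip2 C1 C2] by blast
  have dx: "\<And>t. t \<ge> 0 \<Longrightarrow> (x has_real_derivative F1 (x t) (y t)) (at t within {0..})"
    and dy: "\<And>t. t \<ge> 0 \<Longrightarrow> (y has_real_derivative F2 (y t) (x (t - tau)) (y (t - tau))) (at t within {0..})"
    using der by auto
  have x0: "x 0 = \<phi> 0" "y 0 = \<psi> 0" using ini tau by auto
  have phi0: "0 \<le> \<phi> 0" "\<phi> 0 \<le> A" "0 \<le> \<psi> 0" "\<psi> 0 \<le> P" using phinn[of 0] psinn[of 0] Pb[of 0] AP tau by auto
  have xnn: "x t \<ge> 0" if "t \<ge> 0" for t
  proof -
    have "- x t \<le> 0"
    proof (rule barrier[where a=0 and f="\<lambda>t. - x t" and f'="\<lambda>t. - F1 (x t) (y t)"])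
      fix u :: real assume "u \<ge> 0" thus "((\<lambda>t. - x t) has_real_derivative - F1 (x u) (y u)) (at u within {0..})"
        using dx[of u] by (auto intro: derivative_intros)
    next
      fix u :: real assume "u \<ge> 0" "- x u > 0"
      thus "- F1 (x u) (y u) \<le> 0" using cAf(4)[of "x u"] by (simp add: F1_def)
    qed (use x0 phi0 that in auto)
    thus ?thesis by simp
  qed
  have xA: "x t \<le> A" if "t \<ge> 0" for t
  proof (rule barrier[where a=0 and f=x and f'="\<lambda>t. F1 (x t) (y t)"])
    fix u :: real assume "u \<ge> 0" "x u > A"
    hence "F1 (x u) (y u) = A * (1 - A - cB (y u))" using cAf(5)[of "x u"] by (simp add: F1_def)
    also have "\<dots> \<le> 0" using A1 cBf(1)[of "y u"] by (intro mult_nonneg_nonpos) auto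
    finally show "F1 (x u) (y u) \<le> 0" .
  qed (use dx x0 phi0 that in auto)
  have ynn: "y t \<ge> 0" if "t \<ge> 0" for t
  proof -
    have "- y t \<le> 0"
    proof (rule barrier[where a=0 and f="\<lambda>t. - y t" and f'="\<lambda>t. - F2 (y t) (x (t - tau)) (y (t - tau))"])
      fix u :: real assume "u \<ge> 0" thus "((\<lambda>t. - y t) has_real_derivative - F2 (y u) (x (u - tau)) (y (u - tau))) (at u within {0..})"
        using dy[of u] by (auto intro: derivative_intros)
    next
      fix u :: real assume "u \<ge> 0" "- y u > 0"
      moreover have "0 \<le> K * cB (y (u - tau)) * cA (x (u - tau))"
        using K0 cAf(1) cBf(1) by simp
      moreover have "s * y u < 0" using s \<open>- y u > 0\<close> by (simp add: mult_pos_neg)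
      ultimately show "- F2 (y u) (x (u - tau)) (y (u - tau)) \<le> 0" by (simp add: F2_def)
    qed (use x0 phi0 that in auto)
    thus ?thesis by simp
  qed
  have yB0: "y t \<le> B0" if "0 \<le> t" "t \<le> tau" for t
  proof (rule barrier_fin[where a=0 and b=tau and f=y and f'="\<lambda>t. F2 (y t) (x (t - tau)) (y (t - tau))"])
    fix u :: real assume u: "0 \<le> u" "u \<le> tau" "y u > B0"
    have iu: "u - tau \<in> {-tau..0}" using u by auto
    have "cB (y (u - tau)) \<le> P"
      using ini iu psinn[OF iu] Pb(2)[OF iu] cBf(6)[of "y (u - tau)"] cBf(2) B0P B0B
      by (smt (verit) cB_def max.cobounded1 min.cobounded1)
    moreover have "cA (x (u - tau)) \<le> A" by (rule cAf(2))
    ultimately have "K * cB (y (u - tau)) * cA (x (u - tau)) \<le> K * P * A"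
      using K0 cAf(1) cBf(1) P0 by (simp add: mult.assoc mult_mono mult_left_mono)
    moreover have "s * y u > K * P * A"
    proof -
      have "s * B0 < s * y u" using u(3) s by simp
      moreover have "K * P * A \<le> s * B0" using B0K s by (simp add: field_simps)
      ultimately show ?thesis by linarith
    qed
    ultimately show "F2 (y u) (x (u - tau)) (y (u - tau)) \<le> 0" by (simp add: F2_def)
  qed (use dy x0 phi0 B0P that in auto)
  define W where "W t = K * x (t - tau) + y t" for t
  have yB: "y t \<le> B" if "t \<ge> tau" for t
  proof -
    have "W t \<le> B"
    proof (rule barrier[where a=tau and f=W and f'="\<lambda>t. K * F1 (x (t - tau)) (y (t - tau)) + F2 (y t) (x (t - tau)) (y (t - tau))"])
      fix u :: real assume u: "u \<ge> tau"
      have "((\<lambda>t. x (t - tau)) has_real_derivative F1 (x (u - tau)) (y (u - tau))) (at u within {tau..})"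
        by (rule shift_deriv) (use dx u in auto)
      moreover have "(y has_real_derivative F2 (y u) (x (u - tau)) (y (u - tau))) (at u within {tau..})"
        using dy[of u] u tau by (auto intro: DERIV_subset)
      ultimately show "(W has_real_derivative K * F1 (x (u - tau)) (y (u - tau)) + F2 (y u) (x (u - tau)) (y (u - tau))) (at u within {tau..})"
        unfolding W_def by (auto intro!: derivative_eq_intros)
    next
      fix u :: real assume u: "u \<ge> tau" "W u > B"
      define z where "z = x (u - tau)"
      have z: "0 \<le> z" "z \<le> A" using xnn[of "u - tau"] xA[of "u - tau"] u by (auto simp: z_def)
      have cz: "cA z = z" using cAf(6)[OF z] .
      have "K * F1 (x (u - tau)) (y (u - tau)) + F2 (y u) (x (u - tau)) (y (u - tau))
            = K * z * (1 - z) - s * y u"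
        unfolding F1_def F2_def z_def[symmetric] cz by (simp add: algebra_simps)
      also have "\<dots> \<le> K / 4 - s * y u"
      proof -
        have h: "0 \<le> (z - 1/2) * (z - 1/2)" by simp
        have "z * (1 - z) = 1/4 - (z - 1/2) * (z - 1/2)" by (simp add: field_simps)
        hence "z * (1 - z) \<le> 1 / 4" using h by linarith
        hence "K * (z * (1 - z)) \<le> K * (1/4)" using K0 by (intro mult_left_mono) auto
        thus ?thesis by (simp add: mult.assoc)
      qed
      also have "\<dots> \<le> 0"
      proof -
        have "y u = W u - K * z" by (simp add: W_def z_def)
        hence "y u > B - K * A" using u(2) K0 z by (smt (verit) mult_left_mono)
        hence "s * y u \<ge> s * (B - K * A)" using s by simp
        moreover have "s * (B - K * A) \<ge> K / 4" using BK s by (simp add: field_simps)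
        ultimately show ?thesis by simp
      qed
      finally show "K * F1 (x (u - tau)) (y (u - tau)) + F2 (y u) (x (u - tau)) (y (u - tau)) \<le> 0" .
    next
      have "W tau = K * \<phi> 0 + y tau" using x0 by (simp add: W_def)
      also have "\<dots> \<le> K * A + B0" using yB0[of tau] tau phi0 K0 by (simp add: mult_left_mono add_mono)
      finally show "W tau \<le> B" using BB0 by simp
    qed (use that in auto)
    moreover have "K * x (t - tau) \<ge> 0" using xnn[of "t - tau"] that K0 by simp
    ultimately show ?thesis by (simp add: W_def)
  qed
  have bounds: "0 \<le> x t \<and> x t \<le> A \<and> 0 \<le> y t \<and> y t \<le> B" if "t \<ge> -tau" for t
  proof (cases "t \<le> 0")
    case True
    hence "t \<in> {-tau..0}" using that by auto
    hence "x t = \<phi> t" "y t = \<psi> t" "0 \<le> \<phi> t" "\<phi> t \<le> P" "0 \<le> \<psi> t" "\<psi> t \<le> P"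
      using ini phinn psinn Pb by auto
    thus ?thesis using AP B0P B0B by simp
  next
    case False
    thus ?thesis using xnn[of t] xA[of t] ynn[of t] yB[of t] yB0[of t] B0B by (cases "t \<le> tau") auto
  qed
  have sol: "dde_solution s Y tau \<phi> \<psi> x y"
    unfolding dde_solution_def
  proof (intro conjI allI impI ballI)
    show "continuous_on {-tau..} x" "continuous_on {-tau..} y" by (fact cx cy)+
    fix t assume "t \<in> {-tau..0}" thus "x t = \<phi> t" "y t = \<psi> t" using ini by auto
  next
    fix t :: real assume t: "t \<ge> 0"
    have b: "0 \<le> x t" "x t \<le> A" "0 \<le> y t" "y t \<le> B" "0 \<le> x (t - tau)" "x (t - tau) \<le> A"
      "0 \<le> y (t - tau)" "y (t - tau) \<le> B" using bounds[of t] bounds[of "t - tau"] t tau by auto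
    have "F1 (x t) (y t) = x t * (1 - x t) - y t * x t"
      unfolding F1_def using cAf(6)[OF b(1,2)] cBf(6)[OF b(3,4)] by (simp add: algebra_simps)
    thus "(x has_real_derivative x t * (1 - x t) - y t * x t) (at t within {0..})" using dx[OF t] by simp
    have "F2 (y t) (x (t - tau)) (y (t - tau)) = - s * y t + Y * exp (- s * tau) * y (t - tau) * x (t - tau)"
      unfolding F2_def K_def using cAf(6)[OF b(5,6)] cBf(6)[OF b(7,8)] by simp
    thus "(y has_real_derivative - s * y t + Y * exp (- s * tau) * y (t - tau) * x (t - tau)) (at t within {0..})"
      using dy[OF t] by simp
  qed
  show ?thesis
  proof (rule exI[of _ x], rule exI[of _ y], rule exI[of _ "max A B"], intro conjI allI impI)
    show "dde_solution s Y tau \<phi> \<psi> x y" by (fact sol)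
    fix t :: real assume "t \<ge> -tau"
    from bounds[OF this] show "0 \<le> x t" "x t \<le> max A B" "0 \<le> y t" "y t \<le> max A B"
      by (auto simp: le_max_iff_disj)
  qed
qed

lemma sol_props:
  fixes s Y tau C :: real and \<phi> \<psi> x y :: "real \<Rightarrow> real"
  assumes s: "s > 0" and Y: "Y > 0" and tau: "tau \<ge> 0"
    and sol: "dde_solution s Y tau \<phi> \<psi> x y"
    and bx: "\<forall>t\<ge>-tau. 0 \<le> x t \<and> x t \<le> C \<and> 0 \<le> y t \<and> y t \<le> C"
  shows "(\<forall>t\<ge>0. x t \<ge> 0 \<and> y t \<ge> 0)
        \<and> Limsup at_top (\<lambda>t. ereal (x t)) \<le> ereal 1
        \<and> Limsup at_top (\<lambda>t. ereal (y t)) \<le> ereal (Y * exp (- s * tau) * (s + 1)^2 / (4 * s))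
        \<and> ((\<phi> 0 > 0 \<and> (\<exists>\<theta>\<in>{-tau..0}. \<phi> \<theta> * \<psi> \<theta> > 0)) \<longrightarrow>
             (\<forall>t>0. x t > 0) \<and> (\<exists>T\<ge>0. \<forall>t>T. y t > 0))"
proof -
  define K where "K = Y * exp (- s * tau)"
  have K0: "K > 0" using Y by (simp add: K_def)
  have ini: "\<And>u. u \<in> {-tau..0} \<Longrightarrow> x u = \<phi> u \<and> y u = \<psi> u"
    and dx: "\<And>u. u \<ge> 0 \<Longrightarrow> (x has_real_derivative (x u * (1 - x u) - y u * x u)) (at u within {0..})"
    and dy: "\<And>u. u \<ge> 0 \<Longrightarrow> (y has_real_derivative (- s * y u + K * y (u - tau) * x (u - tau))) (at u within {0..})"
    using sol by (auto simp: dde_solution_def K_def)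
  have xb: "0 \<le> x t" "x t \<le> C" "0 \<le> y t" "y t \<le> C" if "t \<ge> -tau" for t using bx that by auto
  have C0: "C \<ge> 0" using xb(1,2)[of 0] tau by simp
  have P1: "\<forall>t\<ge>0. x t \<ge> 0 \<and> y t \<ge> 0" using xb tau by auto
  have L1: "Limsup at_top (\<lambda>t. ereal (x t)) \<le> ereal 1"
  proof (rule ereal_le_epsilon2)
    fix e :: real assume e: "e > 0"
    have "\<exists>T\<ge>0. \<forall>t\<ge>T. x t \<le> 1 + e"
    proof (rule decay[where f=x and f'="\<lambda>t. x t * (1 - x t) - y t * x t" and d=e])
      fix t :: real assume t: "t \<ge> 0" "x t > 1 + e"
      have "y t * x t \<ge> 0" using xb[of t] t tau by simp
      moreover have "x t * (x t - 1) \<ge> x t - 1"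
        using t e mult_right_mono[of 1 "x t" "x t - 1"] by simp
      ultimately show "x t * (1 - x t) - y t * x t \<le> - e" using t by (simp add: algebra_simps)
    qed (use dx e in auto)
    then obtain T where "\<forall>t\<ge>T. x t \<le> 1 + e" by auto
    hence "eventually (\<lambda>t. ereal (x t) \<le> ereal (1 + e)) at_top"
      by (auto simp: eventually_at_top_linorder)
    hence "Limsup at_top (\<lambda>t. ereal (x t)) \<le> ereal (1 + e)" by (rule Limsup_bounded)
    thus "Limsup at_top (\<lambda>t. ereal (x t)) \<le> ereal 1 + ereal e" by simp
  qed
  define Mv where "Mv = K * (s + 1)^2 / (4 * s)"
  define W where "W t = K * x (t - tau) + y t" for t
  have dW: "(W has_real_derivative K * (x (u - tau) * (1 - x (u - tau)) - y (u - tau) * x (u - tau))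
              + (- s * y u + K * y (u - tau) * x (u - tau))) (at u within {tau..})" if u: "u \<ge> tau" for u
  proof -
    have "((\<lambda>t. x (t - tau)) has_real_derivative x (u - tau) * (1 - x (u - tau)) - y (u - tau) * x (u - tau))
        (at u within {tau..})"
      by (rule shift_deriv) (use dx u in auto)
    moreover have "(y has_real_derivative - s * y u + K * y (u - tau) * x (u - tau)) (at u within {tau..})"
      using dy[of u] u tau by (auto intro: DERIV_subset)
    ultimately show ?thesis unfolding W_def by (auto intro!: derivative_eq_intros)
  qed
  have L2: "Limsup at_top (\<lambda>t. ereal (y t)) \<le> ereal Mv"
  proof (rule ereal_le_epsilon2)
    fix e :: real assume e: "e > 0"
    have "\<exists>T\<ge>tau. \<forall>t\<ge>T. W t \<le> Mv + e"
    proof (rule decay[where f=W and d="s * e"])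
      fix u :: real assume u: "u \<ge> tau"
      show "(W has_real_derivative K * (x (u - tau) * (1 - x (u - tau)) - y (u - tau) * x (u - tau))
              + (- s * y u + K * y (u - tau) * x (u - tau))) (at u within {tau..})" by (rule dW[OF u])
    next
      fix u :: real assume u: "u \<ge> tau" "W u > Mv + e"
      define z where "z = x (u - tau)"
      have "K * (x (u - tau) * (1 - x (u - tau)) - y (u - tau) * x (u - tau)) + (- s * y u + K * y (u - tau) * x (u - tau))
          = K * (z * (1 + s - z)) - s * W u"
        by (simp add: W_def z_def algebra_simps)
      also have "\<dots> \<le> K * ((1 + s)^2 / 4) - s * W u"
      proof -
        have "z * (1 + s - z) = (1 + s)^2 / 4 - (z - (1 + s) / 2) * (z - (1 + s) / 2)"
          by (simp add: field_simps power2_eq_square)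
        moreover have "0 \<le> (z - (1 + s) / 2) * (z - (1 + s) / 2)" by simp
        ultimately have "z * (1 + s - z) \<le> (1 + s)^2 / 4" by linarith
        hence "K * (z * (1 + s - z)) \<le> K * ((1 + s)^2 / 4)" using K0 by (intro mult_left_mono) auto
        thus ?thesis by linarith
      qed
      also have "K * ((1 + s)^2 / 4) = s * Mv" using s by (simp add: Mv_def field_simps)
      also have "s * Mv - s * W u \<le> - (s * e)"
      proof -
        have "s * (Mv + e) < s * W u" using u(2) s by simp
        thus ?thesis by (simp add: algebra_simps)
      qed
      finally show "K * (x (u - tau) * (1 - x (u - tau)) - y (u - tau) * x (u - tau)) + (- s * y u + K * y (u - tau) * x (u - tau))
          \<le> - (s * e)" .
    qed (use s e in auto)
    then obtain T where T: "T \<ge> tau" "\<forall>t\<ge>T. W t \<le> Mv + e" by auto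
    have "y t \<le> Mv + e" if "t \<ge> T" for t
    proof -
      have "x (t - tau) \<ge> 0" using xb(1)[of "t - tau"] that T tau by simp
      hence "K * x (t - tau) \<ge> 0" using K0 by simp
      thus ?thesis using T that by (simp add: W_def) (smt (verit))
    qed
    hence "eventually (\<lambda>t. ereal (y t) \<le> ereal (Mv + e)) at_top"
      by (auto simp: eventually_at_top_linorder)
    hence "Limsup at_top (\<lambda>t. ereal (y t)) \<le> ereal (Mv + e)" by (rule Limsup_bounded)
    thus "Limsup at_top (\<lambda>t. ereal (y t)) \<le> ereal Mv + ereal e" by simp
  qed
  have Mv_eq: "Mv = Y * exp (- s * tau) * (s + 1)^2 / (4 * s)" by (simp add: Mv_def K_def)
  have P3: "(\<forall>t>0. x t > 0) \<and> (\<exists>T\<ge>0. \<forall>t>T. y t > 0)"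
    if ph0: "\<phi> 0 > 0" and th: "\<exists>\<theta>\<in>{-tau..0}. \<phi> \<theta> * \<psi> \<theta> > 0"
  proof
    show "\<forall>t>0. x t > 0"
    proof (intro allI impI)
      fix t :: real assume t: "t > 0"
      define c where "c = 2 * C"
      have "exp (c * 0) * x 0 \<le> exp (c * t) * x t"
      proof (rule mono_deriv[where f="\<lambda>t. exp (c * t) * x t"
            and f'="\<lambda>t. exp (c * t) * (c * x t + (x t * (1 - x t) - y t * x t))"])
        fix u :: real assume u: "u \<ge> 0"
        show "((\<lambda>t. exp (c * t) * x t) has_real_derivative exp (c * u) * (c * x u + (x u * (1 - x u) - y u * x u)))
            (at u within {0..})"
          using dx[OF u] by (auto intro!: derivative_eq_intros simp: algebra_simps)
        have "c * x u + (x u * (1 - x u) - y u * x u) = x u * (1 + (C - x u) + (C - y u))"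
          by (simp add: c_def algebra_simps)
        also have "\<dots> \<ge> 0" using xb[of u] u tau by simp
        finally show "exp (c * u) * (c * x u + (x u * (1 - x u) - y u * x u)) \<ge> 0" by simp
      qed (use t in auto)
      moreover have "x 0 = \<phi> 0" using ini[of 0] tau by simp
      ultimately have "exp (c * t) * x t > 0" using ph0 by simp
      thus "x t > 0" by (simp add: zero_less_mult_iff)
    qed
    obtain \<theta> where th: "\<theta> \<in> {-tau..0}" "\<phi> \<theta> * \<psi> \<theta> > 0" using th by auto
    define u where "u = \<theta> + tau"
    have u0: "u \<ge> 0" using th by (simp add: u_def)
    have "\<exists>t0\<ge>0. y t0 > 0"
    proof (cases "y u > 0")
      case True thus ?thesis using u0 by auto
    next
      case False
      hence yu: "y u = 0" using xb[of u] u0 tau by simp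
      have "x (u - tau) = \<phi> \<theta>" "y (u - tau) = \<psi> \<theta>" using ini[OF th(1)] by (simp_all add: u_def)
      hence "- s * y u + K * y (u - tau) * x (u - tau) > 0"
        using yu th(2) K0 by (simp add: mult.commute mult.left_commute)
      from has_real_derivative_pos_inc_right[OF dy[OF u0] this]
      obtain d where d: "d > 0" "\<forall>h>0. u + h \<in> {0..} \<longrightarrow> h < d \<longrightarrow> y u < y (u + h)" by blast
      hence "y (u + d / 2) > 0" using yu u0 by auto
      moreover have "u + d / 2 \<ge> 0" using u0 d by simp
      ultimately show ?thesis by blast
    qed
    then obtain t0 where t0: "t0 \<ge> 0" "y t0 > 0" by auto
    have "y t > 0" if t: "t > t0" for t
    proof -
      have "exp (s * t0) * y t0 \<le> exp (s * t) * y t"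
      proof (rule mono_deriv[where a=t0 and f="\<lambda>t. exp (s * t) * y t"
            and f'="\<lambda>t. exp (s * t) * (s * y t + (- s * y t + K * y (t - tau) * x (t - tau)))"])
        fix v :: real assume v: "v \<ge> t0"
        have "(y has_real_derivative - s * y v + K * y (v - tau) * x (v - tau)) (at v within {t0..})"
          using dy[of v] v t0 by (auto intro: DERIV_subset)
        thus "((\<lambda>t. exp (s * t) * y t) has_real_derivative exp (s * v) * (s * y v + (- s * y v + K * y (v - tau) * x (v - tau))))
            (at v within {t0..})"
          by (auto intro!: derivative_eq_intros simp: algebra_simps)
        have "K * y (v - tau) * x (v - tau) \<ge> 0" using xb[of "v - tau"] v t0 K0 tau by simp
        thus "exp (s * v) * (s * y v + (- s * y v + K * y (v - tau) * x (v - tau))) \<ge> 0" by simp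
      qed (use t in auto)
      hence "exp (s * t) * y t > 0" using t0 by (smt (verit) exp_gt_zero mult_pos_pos)
      thus ?thesis by (simp add: zero_less_mult_iff)
    qed
    thus "\<exists>T\<ge>0. \<forall>t>T. y t > 0" using t0 by auto
  qed
  show ?thesis using P1 L1 L2 P3 unfolding Mv_eq by blast
qed

theorem proposition2p1:
  fixes s Y tau :: real and \<phi> \<psi> :: "real \<Rightarrow> real"
  assumes "s > 0" and "Y > 0" and "tau \<ge> 0"
    and "init_datum tau \<phi>" and "init_datum tau \<psi>"
  shows "(\<exists>x y. dde_solution s Y tau \<phi> \<psi> x y)
    \<and> (\<forall>x y x' y'. dde_solution s Y tau \<phi> \<psi> x y \<longrightarrow> dde_solution s Y tau \<phi> \<psi> x' y' \<longrightarrow>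
          (\<forall>t\<ge>-tau. x t = x' t \<and> y t = y' t))
    \<and> (\<forall>x y. dde_solution s Y tau \<phi> \<psi> x y \<longrightarrow>
          (\<forall>t\<ge>0. x t \<ge> 0 \<and> y t \<ge> 0)
        \<and> Limsup at_top (\<lambda>t. ereal (x t)) \<le> ereal 1
        \<and> Limsup at_top (\<lambda>t. ereal (y t)) \<le> ereal (Y * exp (- s * tau) * (s + 1)^2 / (4 * s))
        \<and> ((\<phi> 0 > 0 \<and> (\<exists>\<theta>\<in>{-tau..0}. \<phi> \<theta> * \<psi> \<theta> > 0)) \<longrightarrow>
             (\<forall>t>0. x t > 0) \<and> (\<exists>T\<ge>0. \<forall>t>T. y t > 0)))"
proof -
  obtain xs ys C where sol: "dde_solution s Y tau \<phi> \<psi> xs ys"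
    and bnds: "\<forall>t\<ge>-tau. 0 \<le> xs t \<and> xs t \<le> C \<and> 0 \<le> ys t \<and> ys t \<le> C"
    using exist_bounded[OF assms] by blast
  have U: "\<forall>x y x' y'. dde_solution s Y tau \<phi> \<psi> x y \<longrightarrow> dde_solution s Y tau \<phi> \<psi> x' y' \<longrightarrow>
          (\<forall>t\<ge>-tau. x t = x' t \<and> y t = y' t)"
    using dde_unique[OF assms(3)] by blast
  have Pr: "\<forall>x y. dde_solution s Y tau \<phi> \<psi> x y \<longrightarrow>
          (\<forall>t\<ge>0. x t \<ge> 0 \<and> y t \<ge> 0)
        \<and> Limsup at_top (\<lambda>t. ereal (x t)) \<le> ereal 1
        \<and> Limsup at_top (\<lambda>t. ereal (y t)) \<le> ereal (Y * exp (- s * tau) * (s + 1)^2 / (4 * s))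
        \<and> ((\<phi> 0 > 0 \<and> (\<exists>\<theta>\<in>{-tau..0}. \<phi> \<theta> * \<psi> \<theta> > 0)) \<longrightarrow>
             (\<forall>t>0. x t > 0) \<and> (\<exists>T\<ge>0. \<forall>t>T. y t > 0))"
  proof (intro allI impI)
    fix x y assume S: "dde_solution s Y tau \<phi> \<psi> x y"
    have "\<forall>t\<ge>-tau. 0 \<le> x t \<and> x t \<le> C \<and> 0 \<le> y t \<and> y t \<le> C"
    proof (intro allI impI)
      fix t :: real assume t: "t \<ge> -tau"
      hence "x t = xs t \<and> y t = ys t" using dde_unique[OF assms(3) S sol] by blast
      thus "0 \<le> x t \<and> x t \<le> C \<and> 0 \<le> y t \<and> y t \<le> C" using bnds t by auto
    qed
    thus "(\<forall>t\<ge>0. x t \<ge> 0 \<and> y t \<ge> 0)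
        \<and> Limsup at_top (\<lambda>t. ereal (x t)) \<le> ereal 1
        \<and> Limsup at_top (\<lambda>t. ereal (y t)) \<le> ereal (Y * exp (- s * tau) * (s + 1)^2 / (4 * s))
        \<and> ((\<phi> 0 > 0 \<and> (\<exists>\<theta>\<in>{-tau..0}. \<phi> \<theta> * \<psi> \<theta> > 0)) \<longrightarrow>
             (\<forall>t>0. x t > 0) \<and> (\<exists>T\<ge>0. \<forall>t>T. y t > 0))"
      by (rule sol_props[OF assms(1-3) S])
  qed
  show ?thesis using sol U Pr by blast
qed

end
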